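(* Assume the standing assumptions below and let $s>0$. Then every solution $(\phi_1,\phi_2,\phi_3)$ of (TW) (nonnegative, bounded, $C^1$) satisfies $(\phi_1,\phi_2,\phi_3)(z)\to(0,0,0)$ as $z\to-\infty$.
   Context: Standing assumptions. $d_1,d_2,d_3,r_1,r_2,r_3,a,b,h,k$ are positive constants with $a>1$, $0<h,k<1$, $0<b<\frac{1}{2(a-1)}$. For $i=1,2,3$ the kernel $J_i:\mathbb{R}\to\mathbb{R}$ satisfies: (J1) $J_i\ge0$ is Lebesgue measurable, $\int_{\mathbb{R}}J_i=1$, and there are $\eta_i>0$ and $y_i^-<0<y_i^+$ such that $J_i>0$ on $(y_i^--\eta_i,y_i^-+\eta_i)$ and on $(y_i^+-\eta_i,y_i^++\eta_i)$; (J2) $\int_{\mathbb{R}}J_i(y)\,y\,dy=0$; (J3) there are $-\infty\le\tilde\lambda_i<0<\hat\lambda_i\le+\infty$ such that $I_i(\lambda):=\int_{\mathbb{R}}J_i(y)e^{\lambda y}dy<+\infty$ for $\lambda\in(\tilde\lambda_i,\hat\lambda_i)$ and $I_i(\lambda)\to+\infty$ as $\lambda\downarrow\tilde\lambda_i$ and as $\lambda\uparrow\hat\lambda_i$. $\alpha:\mathbb{R}\to\mathbb{R}$ is continuous and satisfies: ($\alpha$1) $\alpha$ has finite limits $\alpha(\pm\infty)$ with $\alpha(-\infty)<0<\alpha(+\infty)$, and $\alpha(z)\le\alpha(+\infty)$ for all $z$; ($\alpha$2) there exist $C>0$, $\rho>0$ with $\alpha(+\infty)-\alpha(z)\le Ce^{-\rho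 z}$ for all sufficiently large $z$. For a function $\phi$ and $i\in\{1,2,3\}$, $\mathcal N_i[\phi](z):=\int_{\mathbb{R}}J_i(y)\phi(z-y)dy-\phi(z)$. For $s>0$, system (TW) is $$\begin{cases}-s\phi_1'=d_1\mathcal N_1[\phi_1]+r_1\phi_1[-1-\phi_1-k\phi_2+a\phi_3],\\ -s\phi_2'=d_2\mathcal N_2[\phi_2]+r_2\phi_2[-1-h\phi_1-\phi_2+a\phi_3],\\ -s\phi_3'=d_3\mathcal N_3[\phi_3]+r_3\phi_3[\alpha(z)-b\phi_1-b\phi_2-\phi_3],\end{cases}\quad z\in\mathbb{R},$$ and a solution means a triple of nonnegative bounded $C^1(\mathbb{R})$ functions satisfying it. *)

theory Defs
  imports "HOL-Analysis.Analysis"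
begin

definition kernel_mgf :: "(real \<Rightarrow> real) \<Rightarrow> real \<Rightarrow> ennreal" where
  "kernel_mgf J l = (\<integral>\<^sup>+ y. ennreal (J y * exp (l * y)) \<partial>lebesgue)"

definition kernel_cond :: "(real \<Rightarrow> real) \<Rightarrow> bool" where
  "kernel_cond J \<longleftrightarrow>
     \<comment> \<open>(J1)\<close>
     (\<forall>y. 0 \<le> J y) \<and> J \<in> borel_measurable lebesgue \<and>
     integrable lebesgue J \<and> (LINT y|lebesgue. J y) = 1 \<and>
     (\<exists>\<eta> ym yp. \<eta> > 0 \<and> ym < 0 \<and> 0 < yp \<and>
        (\<forall>y. ym - \<eta> < y \<and> y < ym + \<eta> \<longrightarrow> J y > 0) \<and>
        (\<forall>y. yp - \<eta> < y \<and> y < yp + \<eta> \<longrightarrow> J y > 0)) \<and>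
     \<comment> \<open>(J2)\<close>
     (LINT y|lebesgue. J y * y) = 0 \<and>
     \<comment> \<open>(J3)\<close>
     (\<exists>tl hl :: ereal. tl < 0 \<and> 0 < hl \<and>
        (\<forall>l. tl < ereal l \<and> ereal l < hl \<longrightarrow> kernel_mgf J l < \<infinity>) \<and>
        (kernel_mgf J \<longlongrightarrow> \<infinity>)
           (if tl = -\<infinity> then at_bot else at_right (real_of_ereal tl)) \<and>
        (kernel_mgf J \<longlongrightarrow> \<infinity>)
           (if hl = \<infinity> then at_top else at_left (real_of_ereal hl)))"

definition alpha_cond :: "(real \<Rightarrow> real) \<Rightarrow> bool" where
  "alpha_cond \<alpha> \<longleftrightarrow> continuous_on UNIV \<alpha> \<and>
     (\<exists>am ap. (\<alpha> \<longlongrightarrow> am) at_bot \<and> (\<alpha> \<longlongrightarrow> ap) at_top \<and> am < 0 \<and> 0 < ap \<and>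
        (\<forall>z. \<alpha> z \<le> ap) \<and>
        (\<exists>C \<rho>. C > 0 \<and> \<rho> > 0 \<and>
           (\<forall>\<^sub>F z in at_top. ap - \<alpha> z \<le> C * exp (- \<rho> * z))))"

definition nonlocal_op :: "(real \<Rightarrow> real) \<Rightarrow> (real \<Rightarrow> real) \<Rightarrow> real \<Rightarrow> real" where
  "nonlocal_op J \<phi> z = (LINT y|lebesgue. J y * \<phi> (z - y)) - \<phi> z"

definition admissible :: "(real \<Rightarrow> real) \<Rightarrow> bool" where
  "admissible \<phi> \<longleftrightarrow> (\<forall>z. 0 \<le> \<phi> z) \<and> bounded (range \<phi>) \<and> \<phi> C1_differentiable_on UNIV"

end

theory Submission
  imports Defs
begin

lemma ident_meas_leb[measurable]: "(\<lambda>x::real. x) \<in> borel_measurable lebesgue"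
  using id_borel_measurable_lebesgue by (simp add: id_def)

lemma cont_meas_leb: "continuous_on UNIV (f::real\<Rightarrow>real) \<Longrightarrow> f \<in> borel_measurable lebesgue"
  using continuous_imp_measurable_on_sets_lebesgue[of UNIV f] by simp

lemma kernel_moment:
  assumes "kernel_cond J"
  shows "integrable lebesgue (\<lambda>w. J w * \<bar>w\<bar>)"
proof -
  from assms have J0: "\<forall>y. 0 \<le> J y" and Jm: "J \<in> borel_measurable lebesgue"
    unfolding kernel_cond_def by auto
  from assms obtain tl hl :: ereal where tl: "tl < 0" and hl: "0 < hl"
    and fin: "\<forall>l. tl < ereal l \<and> ereal l < hl \<longrightarrow> kernel_mgf J l < \<infinity>"
    unfolding kernel_cond_def by blast
  obtain r1 :: real where r1: "tl < ereal r1" "ereal r1 < 0" using ereal_dense2[OF tl] by auto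
  obtain r2 :: real where r2: "0 < ereal r2" "ereal r2 < hl" using ereal_dense2[OF hl] by auto
  define l where "l = min (- r1) r2"
  have lpos: "l > 0" using r1 r2 by (auto simp: l_def)
  have "tl < ereal (- l)" using r1(1) by (rule order.strict_trans2) (auto simp: l_def)
  moreover have "ereal (-l) < hl"
  proof -
    have "ereal (-l) < 0" using lpos by (simp add: zero_ereal_def)
    then show ?thesis using hl by (rule less_trans)
  qed
  ultimately have f1: "kernel_mgf J (-l) < \<infinity>" using fin by blast
  have "tl < ereal l"
  proof -
    have "0 < ereal l" using lpos by (simp add: zero_ereal_def)
    then show ?thesis using tl by (rule less_trans[rotated])
  qed
  moreover have "ereal l < hl" using r2(2) by (rule order.strict_trans1[rotated]) (auto simp: l_def)
  ultimately have f2: "kernel_mgf J l < \<infinity>" using fin by blast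
  have int: "integrable lebesgue (\<lambda>y. J y * exp (c * y))" if "kernel_mgf J c < \<infinity>" for c
  proof (rule integrableI_bounded)
    show "(\<lambda>y. J y * exp (c * y)) \<in> borel_measurable lebesgue" using Jm by measurable
    have "(\<integral>\<^sup>+ y. ennreal (norm (J y * exp (c * y))) \<partial>lebesgue) = kernel_mgf J c"
      unfolding kernel_mgf_def using J0 by (intro nn_integral_cong) auto
    then show "(\<integral>\<^sup>+ y. ennreal (norm (J y * exp (c * y))) \<partial>lebesgue) < \<infinity>" using that by simp
  qed
  have i: "integrable lebesgue (\<lambda>y. (J y * exp ((-l) * y) + J y * exp (l * y)) / l)"
    using int[OF f1] int[OF f2] by auto
  show ?thesis
  proof (rule Bochner_Integration.integrable_bound[OF i])
    show "(\<lambda>w. J w * \<bar>w\<bar>) \<in> borel_measurable lebesgue" using Jm by measurable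
    show "AE x in lebesgue. norm (J x * \<bar>x\<bar>) \<le> norm ((J x * exp (- l * x) + J x * exp (l * x)) / l)"
    proof (rule AE_I2)
      fix x
      have "l * \<bar>x\<bar> \<le> exp (- l * x) + exp (l * x)"
      proof (cases "x \<ge> 0")
        case True
        then show ?thesis using exp_ge_add_one_self[of "l*x"] by (smt (verit) exp_gt_zero)
      next
        case False
        then show ?thesis proof -
          have "1 + (-l*x) \<le> exp (-l*x)" by (rule exp_ge_add_one_self)
          moreover have "0 < exp (l*x)" by simp
          moreover have "l*\<bar>x\<bar> = -l*x" using False by simp
          ultimately show ?thesis by linarith
        qed
      qed
      then have "\<bar>x\<bar> \<le> (exp (- l * x) + exp (l * x)) / l" using lpos by (simp add: field_simps)
      then have "J x * \<bar>x\<bar> \<le> J x * ((exp (- l * x) + exp (l * x)) / l)"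
        using J0 by (intro mult_left_mono) auto
      then show "norm (J x * \<bar>x\<bar>) \<le> norm ((J x * exp (- l * x) + J x * exp (l * x)) / l)"
        using J0 lpos by (simp add: field_simps)
    qed
  qed
qed

lemma mvt_le:
  fixes f f' :: "real \<Rightarrow> real"
  assumes "u \<le> v" and "\<And>x. DERIV f x :> f' x"
  shows "\<exists>\<xi>. u \<le> \<xi> \<and> \<xi> \<le> v \<and> f v - f u = (v - u) * f' \<xi>"
proof (cases "u = v")
  case True then show ?thesis by auto
next
  case False
  then have "u < v" using assms(1) by simp
  from MVT2[OF this assms(2)] show ?thesis by (metis less_eq_real_def)
qed

lemma mvt_bound:
  fixes f f' :: "real \<Rightarrow> real"
  assumes "\<And>x. DERIV f x :> f' x" and "\<And>x. \<bar>f' x\<bar> \<le> K"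
  shows "\<bar>f u - f v\<bar> \<le> K * \<bar>u - v\<bar>"
proof (cases "u \<le> v")
  case True
  from mvt_le[OF True assms(1)] obtain \<xi> where "f v - f u = (v - u) * f' \<xi>" by blast
  then have "\<bar>f u - f v\<bar> = \<bar>u - v\<bar> * \<bar>f' \<xi>\<bar>" by (metis abs_minus_commute abs_mult)
  also have "\<dots> \<le> \<bar>u - v\<bar> * K" by (intro mult_left_mono assms(2)) auto
  finally show ?thesis by (simp add: mult.commute)
next
  case False
  then have "v \<le> u" by simp
  from mvt_le[OF this assms(1)] obtain \<xi> where "f u - f v = (u - v) * f' \<xi>" by blast
  then have "\<bar>f u - f v\<bar> = \<bar>u - v\<bar> * \<bar>f' \<xi>\<bar>" by (simp add: abs_mult)
  also have "\<dots> \<le> \<bar>u - v\<bar> * K" by (intro mult_left_mono assms(2)) auto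
  finally show ?thesis by (simp add: mult.commute)
qed

lemma quad_deriv:
  fixes f :: "real \<Rightarrow> real"
  assumes "\<And>t. \<bar>f (z + t) - f z - t * D\<bar> \<le> C * t\<^sup>2"
  shows "DERIV f z :> D"
  unfolding DERIV_def LIM_eq
proof (intro allI impI)
  fix r :: real assume r: "r > 0"
  have C0: "C \<ge> 0" using assms[of 1] by simp
  show "\<exists>s>0. \<forall>x. x \<noteq> 0 \<and> norm (x - 0) < s \<longrightarrow> norm ((f (z + x) - f z) / x - D) < r"
  proof (intro exI[of _ "r / (C + 1)"] conjI allI impI)
    show "r / (C + 1) > 0" using r C0 by simp
    fix x :: real assume x: "x \<noteq> 0 \<and> norm (x - 0) < r / (C + 1)"
    have "(f (z + x) - f z) / x - D = (f (z + x) - f z - x * D) / x" using x by (simp add: field_simps)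
    then have "norm ((f (z + x) - f z) / x - D) = \<bar>f (z + x) - f z - x * D\<bar> / \<bar>x\<bar>" by (simp add: abs_divide)
    also have "\<dots> \<le> C * x\<^sup>2 / \<bar>x\<bar>" using assms[of x] x by (intro divide_right_mono) auto
    also have "\<dots> = C * \<bar>x\<bar>" using x by (simp add: power2_eq_square field_simps)
    also have "\<dots> \<le> C * (r / (C + 1))" using x C0 by (intro mult_left_mono) auto
    also have "\<dots> < r" using C0 r by (simp add: field_simps)
    finally show "norm ((f (z + x) - f z) / x - D) < r" .
  qed
qed

lemma key:
  fixes J \<phi> \<phi>' g :: "real \<Rightarrow> real" and M Gb s d c z0 :: real
  assumes J0: "\<And>y. 0 \<le> J y" and Jint: "integrable lebesgue J" and J1: "(LINT y|lebesgue. J y) = 1"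
    and Jmom: "integrable lebesgue (\<lambda>w. J w * \<bar>w\<bar>)"
    and p0: "\<And>z. 0 \<le> \<phi> z" and pM: "\<And>z. \<phi> z \<le> M"
    and pd: "\<And>z. (\<phi> has_real_derivative \<phi>' z) (at z)"
    and s: "s > 0" and d: "d \<ge> 0" and c: "c > 0"
    and gb: "\<And>z. \<bar>g z\<bar> \<le> Gb"
    and eq: "\<And>z. - s * \<phi>' z = d * nonlocal_op J \<phi> z + g z"
    and gneg: "\<And>z. z \<le> z0 \<Longrightarrow> g z \<le> - c * \<phi> z"
  shows "(\<phi> \<longlongrightarrow> 0) at_bot"
proof -
  have Jm[measurable]: "J \<in> borel_measurable lebesgue" using Jint by auto
  have M0: "M \<ge> 0" using p0[of 0] pM[of 0] by linarith
  have pcont: "continuous_on UNIV \<phi>"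
    using pd by (meson DERIV_isCont continuous_at_imp_continuous_on)
  have pshift_meas: "(\<lambda>y. \<phi> (z - y)) \<in> borel_measurable lebesgue" for z
    by (rule cont_meas_leb, intro continuous_on_compose2[OF pcont] continuous_intros) auto
  have JpM: "J y * \<phi> (z - y) \<le> M * J y" for y z
    using J0[of y] pM[of "z-y"] by (metis mult.commute mult_left_mono)
  have convint: "integrable lebesgue (\<lambda>y. J y * \<phi> (z - y))" for z
  proof (rule Bochner_Integration.integrable_bound[of _ "\<lambda>y. M * J y"])
    show "integrable lebesgue (\<lambda>y. M * J y)" using Jint by auto
    show "(\<lambda>y. J y * \<phi> (z - y)) \<in> borel_measurable lebesgue"
      using pshift_meas[of z] by measurable
    show "AE y in lebesgue. norm (J y * \<phi> (z - y)) \<le> norm (M * J y)"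
      using J0 p0 M0 JpM by (intro AE_I2) simp
  qed
  have conv_ub: "(LINT y|lebesgue. J y * \<phi> (z - y)) \<le> M" for z
  proof -
    have "(LINT y|lebesgue. J y * \<phi> (z - y)) \<le> (LINT y|lebesgue. M * J y)"
      using convint Jint JpM by (intro integral_mono) auto
    also have "\<dots> = M" using J1 by simp
    finally show ?thesis .
  qed
  have conv_lb: "(LINT y|lebesgue. J y * \<phi> (z - y)) \<ge> 0" for z
    using J0 p0 by (intro integral_nonneg_AE AE_I2) auto
  have Nb: "\<bar>nonlocal_op J \<phi> z\<bar> \<le> M" for z
    unfolding nonlocal_op_def using conv_ub[of z] conv_lb[of z] p0[of z] pM[of z] by linarith
  define B where "B = (d * M + Gb) / s"
  have dbound: "\<bar>\<phi>' z\<bar> \<le> B" for z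
  proof -
    have "s * \<bar>\<phi>' z\<bar> = \<bar>- s * \<phi>' z\<bar>" using s by (simp add: abs_mult)
    also have "\<dots> = \<bar>d * nonlocal_op J \<phi> z + g z\<bar>" by (simp only: eq)
    also have "\<dots> \<le> \<bar>d * nonlocal_op J \<phi> z\<bar> + \<bar>g z\<bar>" by (rule abs_triangle_ineq)
    also have "\<bar>d * nonlocal_op J \<phi> z\<bar> = d * \<bar>nonlocal_op J \<phi> z\<bar>" using d by (simp add: abs_mult)
    also have "d * \<bar>nonlocal_op J \<phi> z\<bar> \<le> d * M" using d Nb[of z] by (rule mult_left_mono[rotated])
    also have "d * M + \<bar>g z\<bar> \<le> d * M + Gb" using gb[of z] by simp
    finally show ?thesis unfolding B_def using s by (simp add: field_simps)
  qed
  have B0: "B \<ge> 0" using dbound[of 0] by linarith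
  have "\<exists>F. \<forall>x::real. (F has_vector_derivative \<phi> x) (at x)"
    using einterval_antiderivative[of "-\<infinity>" "\<infinity>" \<phi>] DERIV_isCont[OF pd] by auto
  then obtain \<Phi> where Phid0: "\<forall>x::real. (\<Phi> has_vector_derivative \<phi> x) (at x)" by blast
  have Phid: "\<And>x. DERIV \<Phi> x :> \<phi> x"
    using Phid0 by (simp add: has_real_derivative_iff_has_vector_derivative)
  have Phi_lip: "\<bar>\<Phi> u - \<Phi> v\<bar> \<le> M * \<bar>u - v\<bar>" for u v
    using mvt_bound[OF Phid, of M] p0 pM by (simp add: abs_of_nonneg)
  have phi_lip: "\<bar>\<phi> u - \<phi> v\<bar> \<le> B * \<bar>u - v\<bar>" for u v
    using mvt_bound[OF pd dbound] by simp
  have taylor: "\<bar>\<Phi> (u + t) - \<Phi> u - t * \<phi> u\<bar> \<le> B * t\<^sup>2" for u t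
  proof -
    define k where "k = (\<lambda>\<tau>. \<Phi> (u + \<tau>) - \<tau> * \<phi> u)"
    have kd: "DERIV k x :> \<phi> (u + x) - \<phi> u" for x
      unfolding k_def by (auto intro!: derivative_eq_intros Phid[THEN DERIV_chain2])
    have kk: "\<Phi> (u + t) - \<Phi> u - t * \<phi> u = k t - k 0" unfolding k_def by simp
    have fin: "\<bar>k t - k 0\<bar> \<le> B * t\<^sup>2" if "X \<le> B * \<bar>t\<bar>" "\<bar>k t - k 0\<bar> = \<bar>t\<bar> * X" for X
    proof -
      have "\<bar>t\<bar> * X \<le> \<bar>t\<bar> * (B * \<bar>t\<bar>)" using that(1) by (intro mult_left_mono) auto
      also have "\<dots> = B * t\<^sup>2" by (simp add: power2_eq_square abs_mult_self_eq mult_ac)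
      finally show ?thesis using that(2) by simp
    qed
    show ?thesis
    proof (cases "0 \<le> t")
      case True
      from mvt_le[OF True kd] obtain \<xi> where xi: "0 \<le> \<xi>" "\<xi> \<le> t" "k t - k 0 = (t - 0) * (\<phi> (u + \<xi>) - \<phi> u)" by blast
      have "\<bar>\<phi> (u + \<xi>) - \<phi> u\<bar> \<le> B * \<bar>t\<bar>" using phi_lip[of "u+\<xi>" u] xi B0
        by (smt (verit) mult_left_mono)
      moreover have "\<bar>k t - k 0\<bar> = \<bar>t\<bar> * \<bar>\<phi> (u + \<xi>) - \<phi> u\<bar>" using xi(3)
        by (simp add: abs_mult)
      ultimately show ?thesis unfolding kk by (rule fin)
    next
      case False
      then have "t \<le> 0" by simp
      from mvt_le[OF this kd] obtain \<xi> where xi: "t \<le> \<xi>" "\<xi> \<le> 0" "k 0 - k t = (0 - t) * (\<phi> (u + \<xi>) - \<phi> u)" by blast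
      have "\<bar>\<phi> (u + \<xi>) - \<phi> u\<bar> \<le> B * \<bar>t\<bar>" using phi_lip[of "u+\<xi>" u] xi B0
        by (smt (verit) mult_left_mono)
      moreover have "\<bar>k t - k 0\<bar> = \<bar>t\<bar> * \<bar>\<phi> (u + \<xi>) - \<phi> u\<bar>" using xi(3)
        by (metis abs_minus_commute abs_mult diff_0 abs_minus_cancel)
      ultimately show ?thesis unfolding kk by (rule fin)
    qed
  qed
  have Phicont: "continuous_on UNIV \<Phi>"
    using Phid by (meson DERIV_isCont continuous_at_imp_continuous_on)
  have Phi_meas: "(\<lambda>w. \<Phi> (z - w)) \<in> borel_measurable lebesgue" for z
    by (rule cont_meas_leb, intro continuous_on_compose2[OF Phicont] continuous_intros) auto
  have Phi_shift: "\<bar>\<Phi> (z - w) - \<Phi> z\<bar> \<le> M * \<bar>w\<bar>" for z w using Phi_lip[of "z-w" z] by simp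
  have Phiint: "integrable lebesgue (\<lambda>w. J w * \<Phi> (z - w))" for z
  proof (rule Bochner_Integration.integrable_bound[of _ "\<lambda>w. \<bar>\<Phi> z\<bar> * J w + M * (J w * \<bar>w\<bar>)"])
    show "integrable lebesgue (\<lambda>w. \<bar>\<Phi> z\<bar> * J w + M * (J w * \<bar>w\<bar>))"
      using Jint Jmom by auto
    show "(\<lambda>w. J w * \<Phi> (z - w)) \<in> borel_measurable lebesgue" using Phi_meas[of z] by measurable
    show "AE w in lebesgue. norm (J w * \<Phi> (z - w)) \<le> norm (\<bar>\<Phi> z\<bar> * J w + M * (J w * \<bar>w\<bar>))"
    proof (rule AE_I2)
      fix w
      have "\<bar>\<Phi> (z - w)\<bar> \<le> \<bar>\<Phi> z\<bar> + M * \<bar>w\<bar>" using Phi_shift[of z w] by linarith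
      then have "J w * \<bar>\<Phi> (z - w)\<bar> \<le> J w * (\<bar>\<Phi> z\<bar> + M * \<bar>w\<bar>)" using J0 by (rule mult_left_mono) 
      moreover have "0 \<le> \<bar>\<Phi> z\<bar> * J w + M * (J w * \<bar>w\<bar>)" using J0[of w] M0 by simp
      ultimately show "norm (J w * \<Phi> (z - w)) \<le> norm (\<bar>\<Phi> z\<bar> * J w + M * (J w * \<bar>w\<bar>))"
        using J0[of w] by (simp add: abs_mult algebra_simps)
    qed
  qed
  define H where "H z = (LINT w|lebesgue. J w * \<Phi> (z - w)) - \<Phi> z" for z
  define m1 where "m1 = (LINT w|lebesgue. J w * \<bar>w\<bar>)"
  have Hrep: "H z = (LINT w|lebesgue. J w * \<Phi> (z - w) - \<Phi> z * J w)" for z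
    using Phiint[of z] Jint J1 unfolding H_def by simp
  have Hb: "\<bar>H z\<bar> \<le> M * m1" for z
  proof -
    have pt: "\<bar>J w * \<Phi> (z - w) - \<Phi> z * J w\<bar> \<le> M * (J w * \<bar>w\<bar>)" for w
    proof -
      have "J w * \<Phi> (z - w) - \<Phi> z * J w = J w * (\<Phi> (z - w) - \<Phi> z)" by (simp add: algebra_simps)
      then have "\<bar>J w * \<Phi> (z - w) - \<Phi> z * J w\<bar> = J w * \<bar>\<Phi> (z - w) - \<Phi> z\<bar>"
        using J0[of w] by (simp add: abs_mult)
      also have "\<dots> \<le> J w * (M * \<bar>w\<bar>)" using J0[of w] Phi_shift[of z w] by (rule mult_left_mono[rotated])
      finally show ?thesis by (simp add: mult_ac)
    qed
    have ptl: "- (M * (J w * \<bar>w\<bar>)) \<le> J w * \<Phi> (z - w) - \<Phi> z * J w" 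
      and ptu: "J w * \<Phi> (z - w) - \<Phi> z * J w \<le> M * (J w * \<bar>w\<bar>)" for w
      using pt[of w] by (auto simp: abs_le_iff)
    have fi: "integrable lebesgue (\<lambda>w. J w * \<Phi> (z - w) - \<Phi> z * J w)" using Phiint[of z] Jint by auto
    have bi: "integrable lebesgue (\<lambda>w. M * (J w * \<bar>w\<bar>))" using Jmom by auto
    have "H z \<le> (LINT w|lebesgue. M * (J w * \<bar>w\<bar>))" unfolding Hrep
      by (intro integral_mono fi bi ptu)
    moreover have "(LINT w|lebesgue. - (M * (J w * \<bar>w\<bar>))) \<le> H z" unfolding Hrep
      by (intro integral_mono fi integrable_minus[OF bi] ptl)
    ultimately show ?thesis unfolding m1_def by simp
  qed
  have Hd: "DERIV H z :> nonlocal_op J \<phi> z" for z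
  proof (rule quad_deriv[where C = "2 * B"])
    fix t
    have I: "(LINT w|lebesgue. J w * \<Phi> (z + t - w) - J w * \<Phi> (z - w) - t * (J w * \<phi> (z - w)))
       = (LINT w|lebesgue. J w * \<Phi> (z + t - w)) - (LINT w|lebesgue. J w * \<Phi> (z - w)) - t * (LINT w|lebesgue. J w * \<phi> (z - w))"
      using Phiint[of "z+t"] Phiint[of z] convint[of z] by simp
    have pt: "\<bar>J w * \<Phi> (z + t - w) - J w * \<Phi> (z - w) - t * (J w * \<phi> (z - w))\<bar> \<le> B * t\<^sup>2 * J w" for w
    proof -
      have "J w * \<Phi> (z + t - w) - J w * \<Phi> (z - w) - t * (J w * \<phi> (z - w))
          = J w * (\<Phi> ((z - w) + t) - \<Phi> (z - w) - t * \<phi> (z - w))" by (simp add: algebra_simps)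
      then have "\<bar>J w * \<Phi> (z + t - w) - J w * \<Phi> (z - w) - t * (J w * \<phi> (z - w))\<bar>
          = J w * \<bar>\<Phi> ((z - w) + t) - \<Phi> (z - w) - t * \<phi> (z - w)\<bar>"
        using J0[of w] by (simp add: abs_mult)
      also have "\<dots> \<le> J w * (B * t\<^sup>2)" using J0[of w] taylor[of "z - w" t] by (rule mult_left_mono[rotated])
      finally show ?thesis by (simp add: mult_ac)
    qed
    have ptl: "- (B * t\<^sup>2 * J w) \<le> J w * \<Phi> (z + t - w) - J w * \<Phi> (z - w) - t * (J w * \<phi> (z - w))"
      and ptu: "J w * \<Phi> (z + t - w) - J w * \<Phi> (z - w) - t * (J w * \<phi> (z - w)) \<le> B * t\<^sup>2 * J w" for w
      using pt[of w] by (auto simp: abs_le_iff)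
    have fi: "integrable lebesgue (\<lambda>w. J w * \<Phi> (z + t - w) - J w * \<Phi> (z - w) - t * (J w * \<phi> (z - w)))"
      using Phiint[of "z+t"] Phiint[of z] convint[of z] by auto
    have bi: "integrable lebesgue (\<lambda>w. B * t\<^sup>2 * J w)" using Jint by auto
    have bint: "(LINT w|lebesgue. B * t\<^sup>2 * J w) = B * t\<^sup>2" using J1 by simp
    have u0: "(LINT w|lebesgue. J w * \<Phi> (z + t - w) - J w * \<Phi> (z - w) - t * (J w * \<phi> (z - w))) \<le> (LINT w|lebesgue. B * t\<^sup>2 * J w)"
      by (intro integral_mono fi bi ptu)
    have u: "(LINT w|lebesgue. J w * \<Phi> (z + t - w) - J w * \<Phi> (z - w) - t * (J w * \<phi> (z - w))) \<le> B * t\<^sup>2"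
      using u0 by (simp only: bint)
    have l0: "(LINT w|lebesgue. - (B * t\<^sup>2 * J w)) \<le> (LINT w|lebesgue. J w * \<Phi> (z + t - w) - J w * \<Phi> (z - w) - t * (J w * \<phi> (z - w)))"
      by (intro integral_mono fi integrable_minus[OF bi] ptl)
    have l: "- (LINT w|lebesgue. J w * \<Phi> (z + t - w) - J w * \<Phi> (z - w) - t * (J w * \<phi> (z - w))) \<le> B * t\<^sup>2"
    proof -
      have "(LINT w|lebesgue. - (B * t\<^sup>2 * J w)) = - (B * t\<^sup>2)" by (simp only: integral_minus bint)
      then show ?thesis using l0 by linarith
    qed
    have e: "H (z + t) - H z - t * nonlocal_op J \<phi> z
        = (LINT w|lebesgue. J w * \<Phi> (z + t - w) - J w * \<Phi> (z - w) - t * (J w * \<phi> (z - w)))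
          - (\<Phi> (z + t) - \<Phi> z - t * \<phi> z)"
      unfolding I H_def nonlocal_op_def by (simp add: algebra_simps)
    show "\<bar>H (z + t) - H z - t * nonlocal_op J \<phi> z\<bar> \<le> 2 * B * t\<^sup>2"
      unfolding e using u l taylor[of z t] by linarith
  qed
  define G where "G z = s * \<phi> z + d * H z" for z
  define K where "K = s * M + d * (M * m1)"
  have Gd: "DERIV G z :> - g z" for z
  proof -
    have "DERIV G z :> s * \<phi>' z + d * nonlocal_op J \<phi> z"
      unfolding G_def[abs_def] by (auto intro!: derivative_eq_intros pd Hd)
    moreover have "s * \<phi>' z + d * nonlocal_op J \<phi> z = - g z" using eq[of z] by linarith
    ultimately show ?thesis by simp
  qed
  have Gbd: "\<bar>G z\<bar> \<le> K" for z
  proof -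
    have "\<bar>s * \<phi> z\<bar> \<le> s * M" using s p0[of z] pM[of z] by (simp add: abs_mult)
    moreover have "\<bar>d * H z\<bar> \<le> d * (M * m1)" using d Hb[of z] by (simp add: abs_mult mult_left_mono)
    ultimately show ?thesis unfolding G_def K_def by linarith
  qed
  have Gmono: "G x \<le> G y" if "x \<le> y" "y \<le> z0" for x y
  proof -
    from mvt_le[OF that(1) Gd] obtain \<xi> where xi: "x \<le> \<xi>" "\<xi> \<le> y" "G y - G x = (y - x) * (- g \<xi>)" by blast
    have "- g \<xi> \<ge> c * \<phi> \<xi>" using gneg[of \<xi>] xi that by linarith
    moreover have "c * \<phi> \<xi> \<ge> 0" using c p0[of \<xi>] by simp
    ultimately have "- g \<xi> \<ge> 0" by linarith
    then have "(y - x) * (- g \<xi>) \<ge> 0" using that(1) by (intro mult_nonneg_nonneg) auto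
    then show ?thesis using xi(3) by linarith
  qed
  have step: "G (x - \<delta>) \<le> G x - \<delta> * c * \<epsilon> / 2"
    if x: "x \<le> z0" "\<phi> x \<ge> \<epsilon>" "\<epsilon> > 0" and dl: "\<delta> = \<epsilon> / (2 * (B + 1))" for x \<epsilon> \<delta>
  proof -
    have dpos: "\<delta> > 0" using dl x B0 by simp
    have "x - \<delta> \<le> x" using dpos by simp
    from mvt_le[OF this Gd] obtain \<xi> where xi: "x - \<delta> \<le> \<xi>" "\<xi> \<le> x" "G x - G (x - \<delta>) = (x - (x - \<delta>)) * (- g \<xi>)" by blast
    have Bd: "B * \<delta> \<le> \<epsilon> / 2" unfolding dl using B0 x(3) by (simp add: field_simps)
    have "\<phi> x - \<phi> \<xi> \<le> B * \<bar>x - \<xi>\<bar>" using phi_lip[of x \<xi>] by linarith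
    also have "\<dots> \<le> B * \<delta>" using xi B0 by (intro mult_left_mono) auto
    finally have "\<phi> \<xi> \<ge> \<epsilon> / 2" using Bd x(2) by linarith
    then have "c * \<phi> \<xi> \<ge> c * (\<epsilon> / 2)" using c by simp
    moreover have "- g \<xi> \<ge> c * \<phi> \<xi>" using gneg[of \<xi>] xi x by linarith
    ultimately have "- g \<xi> \<ge> c * (\<epsilon> / 2)" by linarith
    then have "\<delta> * (- g \<xi>) \<ge> \<delta> * (c * (\<epsilon> / 2))" using dpos by (intro mult_left_mono) auto
    then show ?thesis using xi(3) by simp
  qed
  show ?thesis
  proof (rule ccontr)
    assume nt: "\<not> (\<phi> \<longlongrightarrow> 0) at_bot"
    have "\<exists>e>0. \<forall>N. \<exists>x\<le>N. \<phi> x \<ge> e"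
    proof (rule ccontr)
      assume "\<not> (\<exists>e>0. \<forall>N. \<exists>x\<le>N. \<phi> x \<ge> e)"
      then have "\<forall>e>0. \<exists>N. \<forall>x\<le>N. \<phi> x < e" by (meson not_le)
      then have "(\<phi> \<longlongrightarrow> 0) at_bot"
        unfolding tendsto_iff eventually_at_bot_linorder dist_real_def using p0 by simp
      then show False using nt by simp
    qed
    then obtain \<epsilon> where eps: "\<epsilon> > 0" and freq: "\<And>N. \<exists>x\<le>N. \<phi> x \<ge> \<epsilon>" by blast
    define \<delta> where "\<delta> = \<epsilon> / (2 * (B + 1))"
    define \<eta> where "\<eta> = \<delta> * c * \<epsilon> / 2"
    have etapos: "\<eta> > 0" unfolding \<eta>_def \<delta>_def using eps c B0 by simp
    have ind: "\<exists>x\<le>z0. G x \<le> G z0 - real n * \<eta>" for n :: nat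
    proof (induction n)
      case 0 then show ?case by auto
    next
      case (Suc n)
      then obtain x where x: "x \<le> z0" "G x \<le> G z0 - real n * \<eta>" by blast
      obtain y where y: "y \<le> x" "\<phi> y \<ge> \<epsilon>" using freq[of x] by blast
      have "G (y - \<delta>) \<le> G y - \<eta>" unfolding \<eta>_def using step[OF _ y(2) eps \<delta>_def] y x by linarith
      moreover have "G y \<le> G x" using Gmono y x by simp
      moreover have "\<delta> > 0" unfolding \<delta>_def using eps B0 by simp
      ultimately show ?case using x y by (intro exI[of _ "y - \<delta>"]) (auto simp: algebra_simps)
    qed
    obtain n :: nat where n: "2 * K < real n * \<eta>" using reals_Archimedean3[OF etapos] by blast
    obtain x where "G x \<le> G z0 - real n * \<eta>" using ind[of n] by blast
    then show False using Gbd[of x] Gbd[of z0] n by linarith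
  qed
qed

lemma key2:
  fixes J \<phi> g :: "real \<Rightarrow> real" and Gb s d c zl :: real
  assumes "kernel_cond J" "admissible \<phi>" "s > 0" "d \<ge> 0" "c > 0"
    and "\<And>z. \<bar>g z\<bar> \<le> Gb"
    and "\<And>z. - s * deriv \<phi> z = d * nonlocal_op J \<phi> z + g z"
    and "\<And>z. z \<le> zl \<Longrightarrow> g z \<le> - c * \<phi> z"
  shows "(\<phi> \<longlongrightarrow> 0) at_bot"
proof -
  from assms(1) have J0: "\<And>y. 0 \<le> J y" and Jint: "integrable lebesgue J"
    and J1: "(LINT y|lebesgue. J y) = 1" unfolding kernel_cond_def by auto
  have adm: "\<forall>z. 0 \<le> \<phi> z" "bounded (range \<phi>)" "\<phi> C1_differentiable_on UNIV"
    using assms(2) unfolding admissible_def by auto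
  obtain M where M: "\<And>z. \<bar>\<phi> z\<bar> \<le> M" using adm(2) unfolding bounded_real by blast
  obtain D where D: "\<And>x. (\<phi> has_vector_derivative D x) (at x)"
    using adm(3) unfolding C1_differentiable_on_def by blast
  have pd: "\<And>z. (\<phi> has_real_derivative deriv \<phi> z) (at z)"
    using D by (metis DERIV_imp_deriv has_real_derivative_iff_has_vector_derivative)
  show ?thesis
  proof (rule key[OF J0 Jint J1 kernel_moment[OF assms(1)] _ _ pd assms(3,4,5,6,7,8)])
    show "\<And>z. 0 \<le> \<phi> z" using adm(1) by simp
    show "\<And>z. \<phi> z \<le> M" using M by (metis abs_le_D1)
  qed
qed

lemma alpha_bounded:
  fixes \<alpha> :: "real \<Rightarrow> real"
  assumes "continuous_on UNIV \<alpha>" "(\<alpha> \<longlongrightarrow> am) at_bot" "(\<alpha> \<longlongrightarrow> ap) at_top"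
  shows "\<exists>A. \<forall>z. \<bar>\<alpha> z\<bar> \<le> A"
proof -
  have "\<forall>\<^sub>F z in at_bot. dist (\<alpha> z) am < 1" using assms(2) by (simp add: tendsto_iff)
  then obtain N1 where N1: "\<And>z. z \<le> N1 \<Longrightarrow> dist (\<alpha> z) am < 1" unfolding eventually_at_bot_linorder by blast
  have "\<forall>\<^sub>F z in at_top. dist (\<alpha> z) ap < 1" using assms(3) by (simp add: tendsto_iff)
  then obtain N2 where N2: "\<And>z. z \<ge> N2 \<Longrightarrow> dist (\<alpha> z) ap < 1" unfolding eventually_at_top_linorder by blast
  have "compact (\<alpha> ` {N1..N2})"
    using assms(1) by (intro compact_continuous_image) (auto intro: continuous_on_subset)
  then obtain A0 where A0: "\<And>x. x \<in> \<alpha> ` {N1..N2} \<Longrightarrow> \<bar>x\<bar> \<le> A0"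
    using compact_imp_bounded bounded_real by metis
  show ?thesis
  proof (intro exI allI)
    fix z
    show "\<bar>\<alpha> z\<bar> \<le> max A0 (max (\<bar>am\<bar> + 1) (\<bar>ap\<bar> + 1))"
    proof (cases "z \<le> N1")
      case True then show ?thesis using N1[of z] by (simp add: dist_real_def)
    next
      case False
      show ?thesis
      proof (cases "z \<ge> N2")
        case True then show ?thesis using N2[of z] by (simp add: dist_real_def)
      next
        case False2: False
        then have "\<alpha> z \<in> \<alpha> ` {N1..N2}" using False by auto
        then show ?thesis using A0 by fastforce
      qed
    qed
  qed
qed

lemma absprod: "(r::real) \<ge> 0 \<Longrightarrow> 0 \<le> p \<Longrightarrow> p \<le> M \<Longrightarrow> \<bar>X\<bar> \<le> Q \<Longrightarrow> \<bar>r * p * X\<bar> \<le> r * M * Q"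
proof -
  assume a: "r \<ge> 0" "0 \<le> p" "p \<le> M" "\<bar>X\<bar> \<le> Q"
  have "\<bar>r * p * X\<bar> = r * (p * \<bar>X\<bar>)" using a by (simp add: abs_mult)
  also have "p * \<bar>X\<bar> \<le> M * Q" using a by (intro mult_mono) auto
  then have "r * (p * \<bar>X\<bar>) \<le> r * (M * Q)" using a by (intro mult_left_mono) auto
  finally show ?thesis by (simp add: mult.assoc)
qed

lemma signlem: "(r::real) \<ge> 0 \<Longrightarrow> 0 \<le> p \<Longrightarrow> X \<le> e \<Longrightarrow> r * p * X \<le> r * p * e"
  by (intro mult_left_mono) auto

theorem proposition2p3:
  fixes d1 d2 d3 r1 r2 r3 a b h k s :: real
    and J1 J2 J3 \<alpha> \<phi>1 \<phi>2 \<phi>3 :: "real \<Rightarrow> real"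
  assumes "d1 > 0" "d2 > 0" "d3 > 0" "r1 > 0" "r2 > 0" "r3 > 0"
    and "a > 1" "0 < h" "h < 1" "0 < k" "k < 1" "0 < b" "b < 1 / (2 * (a - 1))"
    and "kernel_cond J1" "kernel_cond J2" "kernel_cond J3"
    and "alpha_cond \<alpha>"
    and "s > 0"
    and "admissible \<phi>1" "admissible \<phi>2" "admissible \<phi>3"
    and "\<forall>z. - s * deriv \<phi>1 z = d1 * nonlocal_op J1 \<phi>1 z
              + r1 * \<phi>1 z * (- 1 - \<phi>1 z - k * \<phi>2 z + a * \<phi>3 z)"
    and "\<forall>z. - s * deriv \<phi>2 z = d2 * nonlocal_op J2 \<phi>2 z
              + r2 * \<phi>2 z * (- 1 - h * \<phi>1 z - \<phi>2 z + a * \<phi>3 z)"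
    and "\<forall>z. - s * deriv \<phi>3 z = d3 * nonlocal_op J3 \<phi>3 z
              + r3 * \<phi>3 z * (\<alpha> z - b * \<phi>1 z - b * \<phi>2 z - \<phi>3 z)"
  shows "(\<phi>1 \<longlongrightarrow> 0) at_bot \<and> (\<phi>2 \<longlongrightarrow> 0) at_bot \<and> (\<phi>3 \<longlongrightarrow> 0) at_bot"
proof -
  have nn1: "\<And>z. 0 \<le> \<phi>1 z" and nn2: "\<And>z. 0 \<le> \<phi>2 z" and nn3: "\<And>z. 0 \<le> \<phi>3 z"
    using assms(19-21) unfolding admissible_def by auto
  obtain M1 where M1: "\<And>z. \<phi>1 z \<le> M1" using assms(19) unfolding admissible_def bounded_real
    by (metis abs_le_D1 rangeI)
  obtain M2 where M2: "\<And>z. \<phi>2 z \<le> M2" using assms(20) unfolding admissible_def bounded_real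
    by (metis abs_le_D1 rangeI)
  obtain M3 where M3: "\<And>z. \<phi>3 z \<le> M3" using assms(21) unfolding admissible_def bounded_real
    by (metis abs_le_D1 rangeI)
  obtain am ap where al: "continuous_on UNIV \<alpha>" "(\<alpha> \<longlongrightarrow> am) at_bot" "(\<alpha> \<longlongrightarrow> ap) at_top" "am < 0"
    using assms(17) unfolding alpha_cond_def by blast
  obtain A where A: "\<And>z. \<bar>\<alpha> z\<bar> \<le> A" using alpha_bounded[OF al(1-3)] by blast
  have "\<forall>\<^sub>F z in at_bot. \<alpha> z < am / 2" using al(2) al(4) by (intro order_tendstoD(2)) auto
  then obtain z3 where z3: "\<And>z. z \<le> z3 \<Longrightarrow> \<alpha> z < am / 2" unfolding eventually_at_bot_linorder by blast
  have b1: "b * \<phi>1 z \<le> b * M1" "0 \<le> b * \<phi>1 z" for z using M1[of z] nn1[of z] assms(12) by (auto intro: mult_left_mono)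
  have b2: "b * \<phi>2 z \<le> b * M2" "0 \<le> b * \<phi>2 z" for z using M2[of z] nn2[of z] assms(12) by (auto intro: mult_left_mono)
  have k2: "k * \<phi>2 z \<le> k * M2" "0 \<le> k * \<phi>2 z" for z using M2[of z] nn2[of z] assms(10) by (auto intro: mult_left_mono)
  have h1: "h * \<phi>1 z \<le> h * M1" "0 \<le> h * \<phi>1 z" for z using M1[of z] nn1[of z] assms(8) by (auto intro: mult_left_mono)
  have a3: "a * \<phi>3 z \<le> a * M3" "0 \<le> a * \<phi>3 z" for z using M3[of z] nn3[of z] assms(7) by (auto intro: mult_left_mono)
  have phi3: "(\<phi>3 \<longlongrightarrow> 0) at_bot"
  proof (rule key2[OF assms(16) assms(21) assms(18), where d = d3 and c = "- r3 * am / 2" and zl = z3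
        and g = "\<lambda>z. r3 * \<phi>3 z * (\<alpha> z - b * \<phi>1 z - b * \<phi>2 z - \<phi>3 z)"
        and Gb = "r3 * M3 * (A + b * M1 + b * M2 + M3)"])
    show "0 \<le> d3" using assms(3) by simp
    show "0 < - r3 * am / 2" using assms(6) al(4) by (simp add: mult_pos_neg)
    show "\<bar>r3 * \<phi>3 z * (\<alpha> z - b * \<phi>1 z - b * \<phi>2 z - \<phi>3 z)\<bar> \<le> r3 * M3 * (A + b * M1 + b * M2 + M3)" for z
    proof (rule absprod)
      show "\<bar>\<alpha> z - b * \<phi>1 z - b * \<phi>2 z - \<phi>3 z\<bar> \<le> A + b * M1 + b * M2 + M3"
        using A[of z] b1[of z] b2[of z] M3[of z] nn3[of z] by linarith
    qed (use assms(6) nn3 M3 in auto)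
    show "- s * deriv \<phi>3 z = d3 * nonlocal_op J3 \<phi>3 z + r3 * \<phi>3 z * (\<alpha> z - b * \<phi>1 z - b * \<phi>2 z - \<phi>3 z)" for z
      using assms(24) by simp
    show "r3 * \<phi>3 z * (\<alpha> z - b * \<phi>1 z - b * \<phi>2 z - \<phi>3 z) \<le> - (- r3 * am / 2) * \<phi>3 z" if "z \<le> z3" for z
    proof -
      have "r3 * \<phi>3 z * (\<alpha> z - b * \<phi>1 z - b * \<phi>2 z - \<phi>3 z) \<le> r3 * \<phi>3 z * (am / 2)"
        using z3[OF that] b1[of z] b2[of z] nn3[of z] assms(6) by (intro signlem) auto
      then show ?thesis by (simp add: algebra_simps)
    qed
  qed
  have "\<forall>\<^sub>F z in at_bot. \<phi>3 z < 1 / (2 * a)" using phi3 assms(7) by (intro order_tendstoD(2)) auto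
  then obtain z1 where z1: "\<And>z. z \<le> z1 \<Longrightarrow> \<phi>3 z < 1 / (2 * a)" unfolding eventually_at_bot_linorder by blast
  have a3s: "a * \<phi>3 z < 1 / 2" if "z \<le> z1" for z
  proof -
    have "a * \<phi>3 z < a * (1 / (2 * a))" using z1[OF that] assms(7) by (intro mult_strict_left_mono) auto
    then show ?thesis using assms(7) by simp
  qed
  have phi1: "(\<phi>1 \<longlongrightarrow> 0) at_bot"
  proof (rule key2[OF assms(14) assms(19) assms(18), where d = d1 and c = "r1 / 2" and zl = z1
        and g = "\<lambda>z. r1 * \<phi>1 z * (- 1 - \<phi>1 z - k * \<phi>2 z + a * \<phi>3 z)"
        and Gb = "r1 * M1 * (1 + M1 + k * M2 + a * M3)"])
    show "0 \<le> d1" using assms(1) by simp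
    show "0 < r1 / 2" using assms(4) by simp
    show "\<bar>r1 * \<phi>1 z * (- 1 - \<phi>1 z - k * \<phi>2 z + a * \<phi>3 z)\<bar> \<le> r1 * M1 * (1 + M1 + k * M2 + a * M3)" for z
    proof (rule absprod)
      show "\<bar>- 1 - \<phi>1 z - k * \<phi>2 z + a * \<phi>3 z\<bar> \<le> 1 + M1 + k * M2 + a * M3"
        using k2[of z] a3[of z] M1[of z] nn1[of z] by linarith
    qed (use assms(4) nn1 M1 in auto)
    show "- s * deriv \<phi>1 z = d1 * nonlocal_op J1 \<phi>1 z + r1 * \<phi>1 z * (- 1 - \<phi>1 z - k * \<phi>2 z + a * \<phi>3 z)" for z
      using assms(22) by simp
    show "r1 * \<phi>1 z * (- 1 - \<phi>1 z - k * \<phi>2 z + a * \<phi>3 z) \<le> - (r1 / 2) * \<phi>1 z" if "z \<le> z1" for z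
    proof -
      have "r1 * \<phi>1 z * (- 1 - \<phi>1 z - k * \<phi>2 z + a * \<phi>3 z) \<le> r1 * \<phi>1 z * (- 1 / 2)"
        using a3s[OF that] k2[of z] nn1[of z] assms(4) by (intro signlem) auto
      then show ?thesis by (simp add: algebra_simps)
    qed
  qed
  have phi2: "(\<phi>2 \<longlongrightarrow> 0) at_bot"
  proof (rule key2[OF assms(15) assms(20) assms(18), where d = d2 and c = "r2 / 2" and zl = z1
        and g = "\<lambda>z. r2 * \<phi>2 z * (- 1 - h * \<phi>1 z - \<phi>2 z + a * \<phi>3 z)"
        and Gb = "r2 * M2 * (1 + h * M1 + M2 + a * M3)"])
    show "0 \<le> d2" using assms(2) by simp
    show "0 < r2 / 2" using assms(5) by simp
    show "\<bar>r2 * \<phi>2 z * (- 1 - h * \<phi>1 z - \<phi>2 z + a * \<phi>3 z)\<bar> \<le> r2 * M2 * (1 + h * M1 + M2 + a * M3)" for z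
    proof (rule absprod)
      show "\<bar>- 1 - h * \<phi>1 z - \<phi>2 z + a * \<phi>3 z\<bar> \<le> 1 + h * M1 + M2 + a * M3"
        using h1[of z] a3[of z] M2[of z] nn2[of z] by linarith
    qed (use assms(5) nn2 M2 in auto)
    show "- s * deriv \<phi>2 z = d2 * nonlocal_op J2 \<phi>2 z + r2 * \<phi>2 z * (- 1 - h * \<phi>1 z - \<phi>2 z + a * \<phi>3 z)" for z
      using assms(23) by simp
    show "r2 * \<phi>2 z * (- 1 - h * \<phi>1 z - \<phi>2 z + a * \<phi>3 z) \<le> - (r2 / 2) * \<phi>2 z" if "z \<le> z1" for z
    proof -
      have "r2 * \<phi>2 z * (- 1 - h * \<phi>1 z - \<phi>2 z + a * \<phi>3 z) \<le> r2 * \<phi>2 z * (- 1 / 2)"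
        using a3s[OF that] h1[of z] nn2[of z] assms(5) by (intro signlem) auto
      then show ?thesis by (simp add: algebra_simps)
    qed
  qed
  show ?thesis using phi1 phi2 phi3 by simp
qed

end
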